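(* Let $L>0$, $d\in\mathbb{N}$, let $I$ be a finite index set and $\mathcal{T}=\{(x_i,g_i,f_i)\}_{i\in I}$ with $x_i,g_i\in\mathbb{R}^d$, $f_i\in\mathbb{R}$. Let $C\subset\mathbb{R}^d$ be a closed convex set with $0\in C$. Define $w_{\mathcal{T}}:\mathbb{R}^d\times\mathbb{R}^d\times\mathbb{R}^I\to\mathbb{R}$ by \[ w_{\mathcal{T}}(y,\nu,\alpha)=\frac{L}{2}\Big\|y+\nu-\sum_{i\in I}\alpha_i\big(x_i-\tfrac1L g_i\big)\Big\|^2+\sum_{i\in I}\alpha_i\Big(f_i-\tfrac{1}{2L}\|g_i\|^2\Big), \] and $W^C_{\mathcal{T}}(y)=\min_{\nu\in C,\ \alpha\in\Delta_I} w_{\mathcal{T}}(y,\nu,\alpha)$, where $\Delta_I=\{\alpha\in\mathbb{R}^I:\sum_{i\in I}\alpha_i=1,\ \alpha_i\geq 0\ \forall i\}$. Then $W^C_{\mathcal{T}}$ is convex and belongs to $C^{1,1}_L$. Furthermore, for any $i\in I$ such that $P_C(-\frac1L g_i)=0$ and \[ \frac{1}{2L}\|g_i-g_j\|^2\leq f_j-f_i-\langle g_i,x_j-x_i\rangle\quad\text{for all } j\in I, \] we have $W^C_{\mathcal{T}}(x_i)=f_i$ and $\nabla W^C_{\mathcal{T}}(x_i)=g_i$.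
   Context: $P_C$ denotes the Euclidean projection onto $C$. $C^{1,1}_L$ denotes the class of differentiable functions on $\mathbb{R}^d$ whose gradient is Lipschitz continuous with constant $L$. *)

theory Defs
  imports "HOL-Analysis.Analysis"
begin

definition simplex_idx :: "'i set \<Rightarrow> ('i \<Rightarrow> real) set" where
  "simplex_idx I = {\<alpha>. (\<Sum>k\<in>I. \<alpha> k) = 1 \<and> (\<forall>k\<in>I. \<alpha> k \<ge> 0)}"

definition w_T :: "real \<Rightarrow> 'i set \<Rightarrow> ('i \<Rightarrow> 'a::euclidean_space) \<Rightarrow> ('i \<Rightarrow> 'a) \<Rightarrow> ('i \<Rightarrow> real)
    \<Rightarrow> 'a \<Rightarrow> 'a \<Rightarrow> ('i \<Rightarrow> real) \<Rightarrow> real" where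
  "w_T L I x g f y \<nu> \<alpha> =
     L / 2 * (norm (y + \<nu> - (\<Sum>k\<in>I. \<alpha> k *\<^sub>R (x k - (1 / L) *\<^sub>R g k))))\<^sup>2
     + (\<Sum>k\<in>I. \<alpha> k * (f k - 1 / (2 * L) * (norm (g k))\<^sup>2))"

text \<open>W^C_T(y) = min over nu in C, alpha in the simplex of w_T; defined as the infimum
  (the theorem also asserts that the infimum is attained, i.e. it is a minimum).\<close>
definition W_T :: "real \<Rightarrow> 'i set \<Rightarrow> ('i \<Rightarrow> 'a::euclidean_space) \<Rightarrow> ('i \<Rightarrow> 'a) \<Rightarrow> ('i \<Rightarrow> real)
    \<Rightarrow> 'a set \<Rightarrow> 'a \<Rightarrow> real" where
  "W_T L I x g f C y = Inf {w_T L I x g f y \<nu> \<alpha> | \<nu> \<alpha>. \<nu> \<in> C \<and> \<alpha> \<in> simplex_idx I}"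

definition C11 :: "real \<Rightarrow> ('a::euclidean_space \<Rightarrow> real) \<Rightarrow> bool" where
  "C11 L F \<longleftrightarrow> (\<exists>G. (\<forall>z. (F has_derivative (\<lambda>h. G z \<bullet> h)) (at z))
                   \<and> (\<forall>u v. norm (G u - G v) \<le> L * norm (u - v)))"

end

theory Submission
  imports Defs
begin


lemma quad_nonneg:
  fixes a b :: real
  assumes H: "\<And>s. 0 < s \<Longrightarrow> s \<le> 1 \<Longrightarrow> 0 \<le> a * s + b * s ^ 2" and b: "b \<ge> 0"
  shows "a \<ge> 0"
proof (rule ccontr)
  assume na: "\<not> a \<ge> 0"
  show False
  proof (cases "b = 0")
    case True then show False using H[of 1] na by simp
  next
    case False
    then have bp: "b > 0" using b by simp
    define s where "s = min 1 (-a/(2*b))"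
    have "a/(2*b) < 0" using na bp by (simp add: divide_neg_pos)
    then have s0: "s > 0" by (simp add: s_def)
    have s1: "s \<le> 1" by (simp add: s_def)
    have "s \<le> -a/(2*b)" unfolding s_def by (rule min.cobounded2)
    then have "b* s \<le> b*(-a/(2*b))" using mult_left_mono[OF _ less_imp_le[OF bp]] by blast
    also have "\<dots> = -a/2" using bp by simp
    finally have "a + b* s \<le> a/2" by simp
    then have "s*(a + b* s) \<le> s*(a/2)" using s0 by (simp add: mult_left_mono)
    moreover have "s*(a/2) < 0" using s0 na by (simp add: mult_pos_neg)
    ultimately have "a * s + b * s ^ 2 < 0" by (simp add: power2_eq_square algebra_simps)
    then show False using H[OF s0 s1] by simp
  qed
qed

lemma norm_sq_diff:
  fixes u v :: "'a::real_inner"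
  shows "(norm (u - s *\<^sub>R v))^2 = (norm u)^2 - 2* s*(u \<bullet> v) + s^2*(norm v)^2"
  unfolding power2_norm_eq_inner by (simp add: inner_diff_left inner_diff_right inner_commute algebra_simps power2_eq_square)

lemma norm_sq_add:
  fixes u v :: "'a::real_inner"
  shows "(norm (u + v))^2 = (norm u)^2 + 2*(u \<bullet> v) + (norm v)^2"
  unfolding power2_norm_eq_inner by (simp add: inner_add_left inner_add_right inner_commute algebra_simps)

lemma norm_sq_convex:
  fixes a b :: "'a::real_inner"
  assumes "u \<ge> 0" "v \<ge> 0" "u + v = 1"
  shows "(norm (u *\<^sub>R a + v *\<^sub>R b))^2 \<le> u * (norm a)^2 + v * (norm b)^2"
proof -
  have v: "v = 1 - u" using assms by simp
  have "u * (norm a)^2 + v * (norm b)^2 - (norm (u *\<^sub>R a + v *\<^sub>R b))^2 = u * v * (norm (a - b))^2"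
    unfolding v power2_norm_eq_inner by (simp add: inner_add_left inner_add_right inner_diff_left inner_diff_right inner_commute algebra_simps power2_eq_square)
  moreover have "u * v * (norm (a - b))^2 \<ge> 0" using assms by simp
  ultimately show ?thesis by linarith
qed

locale wsetup =
  fixes L :: real and I :: "'i set" and x g :: "'i \<Rightarrow> 'a::euclidean_space"
    and f :: "'i \<Rightarrow> real" and C :: "'a set"
  assumes Lpos: "L > 0" and finI: "finite I" and Ine: "I \<noteq> {}"
    and clC: "closed C" and cvxC: "convex C" and C0: "0 \<in> C"
begin

definition z where "z k = x k - (1/L) *\<^sub>R g k"
definition c where "c k = f k - 1/(2*L) * (norm (g k))^2"
definition P where "P \<nu> \<alpha> = (\<Sum>k\<in>I. \<alpha> k *\<^sub>R z k) - \<nu>"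
definition T where "T \<alpha> = (\<Sum>k\<in>I. \<alpha> k * c k)"

lemma w_alt: "w_T L I x g f y \<nu> \<alpha> = L/2 * (norm (y - P \<nu> \<alpha>))^2 + T \<alpha>"
  unfolding w_T_def P_def T_def z_def c_def by (simp add: algebra_simps)

definition M where "M y \<nu> \<alpha> \<longleftrightarrow> \<nu> \<in> C \<and> \<alpha> \<in> simplex_idx I \<and>
   (\<forall>\<nu>'\<in>C. \<forall>\<alpha>'\<in>simplex_idx I. w_T L I x g f y \<nu> \<alpha> \<le> w_T L I x g f y \<nu>' \<alpha>')"

lemma M_W: "M y \<nu> \<alpha> \<Longrightarrow> W_T L I x g f C y = w_T L I x g f y \<nu> \<alpha>"
  unfolding W_T_def M_def by (rule cInf_eq_minimum) auto

lemma simplex_comb: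
  assumes "\<alpha> \<in> simplex_idx I" "\<beta> \<in> simplex_idx I" "u \<ge> 0" "v \<ge> 0" "u + v = 1"
  shows "(\<lambda>k. u * \<alpha> k + v * \<beta> k) \<in> simplex_idx I"
  using assms unfolding simplex_idx_def by (auto simp: sum.distrib sum_distrib_left[symmetric])

lemma P_comb: "P (u *\<^sub>R \<nu> + v *\<^sub>R \<nu>') (\<lambda>k. u * \<alpha> k + v * \<beta> k) = u *\<^sub>R P \<nu> \<alpha> + v *\<^sub>R P \<nu>' \<beta>"
  unfolding P_def by (simp add: scaleR_add_left sum.distrib scaleR_sum_right algebra_simps)

lemma T_comb: "T (\<lambda>k. u * \<alpha> k + v * \<beta> k) = u * T \<alpha> + v * T \<beta>"
  unfolding T_def by (simp add: sum.distrib sum_distrib_left algebra_simps)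

end


lemma aux_ineq:
  fixes L N t1 s ip Q t2 :: real
  assumes "L/2*N + t1 \<le> L/2*(N - 2 * s * ip + s^2*Q) + ((1-s)*t1 + s*t2)"
  shows "0 \<le> (L*(-ip) + (t2 - t1))* s + (L/2*Q)* s^2"
proof -
  have "L/2*(N - 2 * s * ip + s^2*Q) + ((1-s)*t1 + s*t2) - (L/2*N + t1) = (L*(-ip) + (t2 - t1))* s + (L/2*Q)* s^2"
    by (simp add: algebra_simps power2_eq_square)
  then show ?thesis using assms by linarith
qed

context wsetup
begin

lemma VI:
  assumes "M y \<nu> \<alpha>" "\<nu>' \<in> C" "\<alpha>' \<in> simplex_idx I"
  shows "0 \<le> L * ((P \<nu> \<alpha> - y) \<bullet> (P \<nu>' \<alpha>' - P \<nu> \<alpha>)) + (T \<alpha>' - T \<alpha>)"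
proof -
  define A where "A = P \<nu> \<alpha>"
  define B where "B = P \<nu>' \<alpha>'"
  have M: "\<nu> \<in> C" "\<alpha> \<in> simplex_idx I"
    "\<And>\<nu>' \<alpha>'. \<nu>' \<in> C \<Longrightarrow> \<alpha>' \<in> simplex_idx I \<Longrightarrow> w_T L I x g f y \<nu> \<alpha> \<le> w_T L I x g f y \<nu>' \<alpha>'"
    using assms(1) unfolding M_def by auto
  have key: "0 \<le> (L * ((A - y) \<bullet> (B - A)) + (T \<alpha>' - T \<alpha>)) * s + (L/2 * (norm (B - A))^2) * s ^ 2"
    if s: "0 < s" "s \<le> 1" for s
  proof -
    have "(1 - s) *\<^sub>R \<nu> + s *\<^sub>R \<nu>' \<in> C"
      using s M(1) assms(2) by (intro convexD[OF cvxC]) auto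
    moreover have "(\<lambda>k. (1 - s) * \<alpha> k + s * \<alpha>' k) \<in> simplex_idx I"
      using s M(2) assms(3) by (intro simplex_comb) auto
    ultimately have le: "w_T L I x g f y \<nu> \<alpha> \<le> w_T L I x g f y ((1 - s) *\<^sub>R \<nu> + s *\<^sub>R \<nu>') (\<lambda>k. (1 - s) * \<alpha> k + s * \<alpha>' k)"
      by (rule M(3))
    have e: "y - ((1 - s) *\<^sub>R A + s *\<^sub>R B) = (y - A) - s *\<^sub>R (B - A)"
      by (simp add: algebra_simps)
    have eq1: "w_T L I x g f y ((1 - s) *\<^sub>R \<nu> + s *\<^sub>R \<nu>') (\<lambda>k. (1 - s) * \<alpha> k + s * \<alpha>' k)
       = L/2 * ((norm (y - A))^2 - 2 * s * ((y - A) \<bullet> (B - A)) + s^2*(norm (B - A))^2) + ((1 - s) * T \<alpha> + s * T \<alpha>')"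
      unfolding w_alt P_comb T_comb A_def[symmetric] B_def[symmetric] e norm_sq_diff by (rule refl)
    have eq2: "w_T L I x g f y \<nu> \<alpha> = L/2 * (norm (y - A))^2 + T \<alpha>"
      unfolding w_alt A_def by (rule refl)
    have eq3: "(A - y) \<bullet> (B - A) = - ((y - A) \<bullet> (B - A))"
      by (simp add: inner_diff_left)
    from le have "L/2 * (norm (y - A))^2 + T \<alpha> \<le> L/2 * ((norm (y - A))^2 - 2 * s * ((y - A) \<bullet> (B - A)) + s^2*(norm (B - A))^2) + ((1 - s) * T \<alpha> + s * T \<alpha>')"
      unfolding eq1 eq2 .
    from aux_ineq[OF this] show ?thesis unfolding eq3 .
  qed
  have bnn: "0 \<le> L/2 * (norm (B - A))^2" using Lpos by (intro mult_nonneg_nonneg) auto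
  have "0 \<le> L * ((A - y) \<bullet> (B - A)) + (T \<alpha>' - T \<alpha>)"
    by (rule quad_nonneg[OF key bnn])
  then show ?thesis unfolding A_def B_def .
qed

lemma firm:
  assumes "M y1 \<nu>1 \<alpha>1" "M y2 \<nu>2 \<alpha>2"
  shows "(norm (P \<nu>2 \<alpha>2 - P \<nu>1 \<alpha>1))^2 \<le> (y2 - y1) \<bullet> (P \<nu>2 \<alpha>2 - P \<nu>1 \<alpha>1)"
proof -
  define A where "A = P \<nu>1 \<alpha>1"
  define B where "B = P \<nu>2 \<alpha>2"
  have "0 \<le> L * ((A - y1) \<bullet> (B - A)) + (T \<alpha>2 - T \<alpha>1)"
    using VI[OF assms(1)] assms(2) unfolding M_def A_def B_def by auto
  moreover have "0 \<le> L * ((B - y2) \<bullet> (A - B)) + (T \<alpha>1 - T \<alpha>2)"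
    using VI[OF assms(2)] assms(1) unfolding M_def A_def B_def by auto
  ultimately have "0 \<le> L * ((A - y1) \<bullet> (B - A) + (B - y2) \<bullet> (A - B))"
    by (simp add: algebra_simps)
  then have "0 \<le> (A - y1) \<bullet> (B - A) + (B - y2) \<bullet> (A - B)"
    using Lpos by (simp add: zero_le_mult_iff)
  moreover have "(A - y1) \<bullet> (B - A) + (B - y2) \<bullet> (A - B) = (y2 - y1) \<bullet> (B - A) - (B - A) \<bullet> (B - A)"
    by (simp add: inner_diff_left inner_diff_right inner_commute algebra_simps)
  ultimately show ?thesis unfolding A_def[symmetric] B_def[symmetric]
    by (simp add: power2_norm_eq_inner)
qed

lemma nonexp:
  assumes "M y1 \<nu>1 \<alpha>1" "M y2 \<nu>2 \<alpha>2"
  shows "norm (P \<nu>2 \<alpha>2 - P \<nu>1 \<alpha>1) \<le> norm (y2 - y1)"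
proof -
  define d where "d = P \<nu>2 \<alpha>2 - P \<nu>1 \<alpha>1"
  have "(norm d)^2 \<le> (y2 - y1) \<bullet> d" using firm[OF assms] unfolding d_def .
  also have "\<dots> \<le> norm (y2 - y1) * norm d" by (rule norm_cauchy_schwarz)
  finally have "norm d * norm d \<le> norm (y2 - y1) * norm d" by (simp add: power2_eq_square)
  then show ?thesis unfolding d_def[symmetric]
    by (metis mult_right_le_imp_le norm_ge_zero order_le_less zero_le_mult_iff)
qed

lemma lip:
  assumes "M y1 \<nu>1 \<alpha>1" "M y2 \<nu>2 \<alpha>2"
  shows "norm ((y2 - P \<nu>2 \<alpha>2) - (y1 - P \<nu>1 \<alpha>1)) \<le> norm (y2 - y1)"
proof -
  define d where "d = P \<nu>2 \<alpha>2 - P \<nu>1 \<alpha>1"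
  define h where "h = y2 - y1"
  have fi: "(norm d)^2 \<le> h \<bullet> d" using firm[OF assms] unfolding d_def h_def .
  have e: "(y2 - P \<nu>2 \<alpha>2) - (y1 - P \<nu>1 \<alpha>1) = h - d" unfolding d_def h_def by (simp add: algebra_simps)
  have "(norm (h - d))^2 = (norm h)^2 - 2 * (h \<bullet> d) + (norm d)^2"
    using norm_sq_diff[of h 1 d] by simp
  also have "\<dots> \<le> (norm h)^2" using fi zero_le_power2[of "norm d"] by linarith
  finally show ?thesis unfolding e h_def[symmetric]
    using power2_le_imp_le norm_ge_zero by blast
qed

end


context wsetup
begin

definition hh where "hh k = (z k, c k)"
definition Q where "Q = (\<lambda>\<alpha>. \<Sum>k\<in>I. \<alpha> k *\<^sub>R hh k) ` simplex_idx I"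

lemma delta_simplex: "i \<in> I \<Longrightarrow> (\<lambda>k. if k = i then 1 else 0) \<in> simplex_idx I"
  unfolding simplex_idx_def using finI by auto

lemma sum_delta: assumes "i \<in> I" shows "(\<Sum>k\<in>I. (if k = i then 1 else 0) *\<^sub>R (v k :: 'b::real_vector)) = v i"
proof -
  have "(\<Sum>k\<in>I. (if k = i then 1 else 0) *\<^sub>R v k) = (\<Sum>k\<in>I. if k = i then v k else 0)"
    by (rule sum.cong) auto
  then show ?thesis using finI assms by simp
qed

lemma Q_hull: "convex hull (hh ` I) = Q"
proof (rule hull_unique)
  show "hh ` I \<subseteq> Q"
  proof
    fix p assume "p \<in> hh ` I"
    then obtain i where i: "i \<in> I" "p = hh i" by auto
    have "p = (\<Sum>k\<in>I. (if k = i then 1 else 0) *\<^sub>R hh k)" using sum_delta[OF i(1), of hh] i(2) by simp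
    then show "p \<in> Q" unfolding Q_def by (rule image_eqI[OF _ delta_simplex[OF i(1)]])
  qed
  show "convex Q"
    unfolding convex_def
  proof (intro ballI allI impI)
    fix p q and u v :: real
    assume p: "p \<in> Q" and q: "q \<in> Q" and u0: "0 \<le> u" and v0: "0 \<le> v" and uv: "u + v = 1"
    obtain \<alpha> where a: "\<alpha> \<in> simplex_idx I" "p = (\<Sum>k\<in>I. \<alpha> k *\<^sub>R hh k)" using p unfolding Q_def by auto
    obtain \<beta> where b: "\<beta> \<in> simplex_idx I" "q = (\<Sum>k\<in>I. \<beta> k *\<^sub>R hh k)" using q unfolding Q_def by auto
    have "u *\<^sub>R p + v *\<^sub>R q = (\<Sum>k\<in>I. (u * \<alpha> k + v * \<beta> k) *\<^sub>R hh k)"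
      unfolding a b by (simp add: scaleR_add_left sum.distrib scaleR_sum_right)
    moreover have "(\<lambda>k. u * \<alpha> k + v * \<beta> k) \<in> simplex_idx I"
      using a b u0 v0 uv by (intro simplex_comb) auto
    ultimately show "u *\<^sub>R p + v *\<^sub>R q \<in> Q" unfolding Q_def by auto
  qed
  fix S assume S: "hh ` I \<subseteq> S" "convex S"
  show "Q \<subseteq> S"
  proof
    fix p assume "p \<in> Q"
    then obtain \<alpha> where a: "\<alpha> \<in> simplex_idx I" "p = (\<Sum>k\<in>I. \<alpha> k *\<^sub>R hh k)" unfolding Q_def by auto
    show "p \<in> S" unfolding a(2)
      using a(1) S by (intro convex_sum[OF finI S(2)]) (auto simp: simplex_idx_def)
  qed
qed

lemma Q_compact: "compact Q"
  unfolding Q_hull[symmetric] by (intro compact_convex_hull finite_imp_compact) (use finI in auto)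

lemma Q_ne: "Q \<noteq> {}"
  using Ine unfolding Q_hull[symmetric] by auto

lemma sum_hh: "(\<Sum>k\<in>I. \<alpha> k *\<^sub>R hh k) = (\<Sum>k\<in>I. \<alpha> k *\<^sub>R z k, T \<alpha>)"
  unfolding hh_def T_def by (simp add: prod_eq_iff fst_sum snd_sum)

lemma exists_M: "\<exists>\<nu> \<alpha>. M y \<nu> \<alpha>"
proof -
  have Cne: "C \<noteq> {}" using C0 by auto
  define \<phi> where "\<phi> q = L/2 * (dist (fst q - y) (closest_point C (fst q - y)))^2 + snd q" for q :: "'a \<times> real"
  have "continuous_on Q \<phi>"
    unfolding \<phi>_def
    by (intro continuous_intros continuous_on_compose2[OF continuous_on_closest_point[OF cvxC clC Cne, of UNIV]]) auto
  then obtain q0 where q0: "q0 \<in> Q" "\<And>q. q \<in> Q \<Longrightarrow> \<phi> q0 \<le> \<phi> q"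
    using continuous_attains_inf[OF Q_compact Q_ne] by blast
  obtain \<alpha>0 where a0: "\<alpha>0 \<in> simplex_idx I" "q0 = (\<Sum>k\<in>I. \<alpha>0 k *\<^sub>R hh k)" using q0(1) unfolding Q_def by auto
  define a where "a \<alpha> = (\<Sum>k\<in>I. \<alpha> k *\<^sub>R z k)" for \<alpha>
  define \<nu>0 where "\<nu>0 = closest_point C (a \<alpha>0 - y)"
  have n0: "\<nu>0 \<in> C" unfolding \<nu>0_def by (rule closest_point_in_set[OF clC Cne])
  have wd: "w_T L I x g f y \<nu> \<alpha> = L/2 * (dist (a \<alpha> - y) \<nu>)^2 + T \<alpha>" for \<nu> \<alpha>
  proof -
    have "y - P \<nu> \<alpha> = -((a \<alpha> - y) - \<nu>)"
      unfolding P_def a_def by (simp add: algebra_simps)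
    then have "norm (y - P \<nu> \<alpha>) = dist (a \<alpha> - y) \<nu>"
      unfolding dist_norm by (metis norm_minus_cancel)
    then show ?thesis unfolding w_alt by simp
  qed
  have phiq: "\<phi> (\<Sum>k\<in>I. \<alpha> k *\<^sub>R hh k) = L/2 * (dist (a \<alpha> - y) (closest_point C (a \<alpha> - y)))^2 + T \<alpha>" for \<alpha>
    unfolding \<phi>_def sum_hh a_def by simp
  have "M y \<nu>0 \<alpha>0"
    unfolding M_def
  proof (intro conjI ballI n0 a0(1))
    fix \<nu>' \<alpha>' assume n': "\<nu>' \<in> C" and a': "\<alpha>' \<in> simplex_idx I"
    have "w_T L I x g f y \<nu>0 \<alpha>0 = \<phi> q0" unfolding wd a0(2) phiq \<nu>0_def by simp
    also have "\<dots> \<le> \<phi> (\<Sum>k\<in>I. \<alpha>' k *\<^sub>R hh k)" using a' by (intro q0(2)) (auto simp: Q_def)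
    also have "\<dots> \<le> w_T L I x g f y \<nu>' \<alpha>'"
      unfolding wd phiq using closest_point_le[OF clC n', of "a \<alpha>' - y"] Lpos
      by (simp add: power_mono)
    finally show "w_T L I x g f y \<nu>0 \<alpha>0 \<le> w_T L I x g f y \<nu>' \<alpha>'" .
  qed
  then show ?thesis by blast
qed

end



lemma aux2:
  fixes L Wy Wy' NA NB NA' NB' iA iAB nh TA TB :: real
  assumes L: "L > 0" and "Wy = L/2*NA + TA" "Wy' = L/2*NB' + TB" "Wy' \<le> L/2*NA' + TA" "Wy \<le> L/2*NB + TB"
    "NA' = NA + 2*iA + nh^2" "NB' = NB + 2*(iA + iAB) + nh^2" "\<bar>iAB\<bar> \<le> nh^2"
  shows "\<bar>Wy' - Wy - L*iA\<bar> \<le> L*nh^2"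
proof -
  have "L*iAB \<ge> -(L*nh^2)" "L*iAB \<le> L*nh^2" using assms(8) L
    by (auto intro: mult_left_mono simp: abs_le_iff) (smt (verit) mult_left_mono mult_minus_right)
  then show ?thesis using assms by (simp add: algebra_simps abs_le_iff)
qed

context wsetup
begin

lemma deriv:
  assumes My: "M y \<nu> \<alpha>"
  shows "(W_T L I x g f C has_derivative (\<lambda>h. (L *\<^sub>R (y - P \<nu> \<alpha>)) \<bullet> h)) (at y)"
  unfolding has_derivative_at_alt
proof (intro conjI allI impI)
  show "bounded_linear (\<lambda>h. (L *\<^sub>R (y - P \<nu> \<alpha>)) \<bullet> h)" by (rule bounded_linear_inner_right)
  fix e :: real assume e: "e > 0"
  show "\<exists>d>0. \<forall>y'. norm (y' - y) < d \<longrightarrow>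
      norm (W_T L I x g f C y' - W_T L I x g f C y - (L *\<^sub>R (y - P \<nu> \<alpha>)) \<bullet> (y' - y)) \<le> e * norm (y' - y)"
  proof (intro exI[of _ "e/L"] conjI allI impI)
    show "e/L > 0" using e Lpos by simp
    fix y' assume y': "norm (y' - y) < e/L"
    obtain \<nu>' \<alpha>' where My': "M y' \<nu>' \<alpha>'" using exists_M by blast
    define A where "A = P \<nu> \<alpha>"
    define B where "B = P \<nu>' \<alpha>'"
    define h where "h = y' - y"
    have f1: "\<nu> \<in> C" "\<alpha> \<in> simplex_idx I" "\<nu>' \<in> C" "\<alpha>' \<in> simplex_idx I" using My My' unfolding M_def by auto
    have e1: "W_T L I x g f C y = L/2 * (norm (y - A))^2 + T \<alpha>" using M_W[OF My] w_alt A_def by simp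
    have e2: "W_T L I x g f C y' = L/2 * (norm (y' - B))^2 + T \<alpha>'" using M_W[OF My'] w_alt B_def by simp
    have e3: "W_T L I x g f C y' \<le> L/2 * (norm (y' - A))^2 + T \<alpha>"
      using M_W[OF My'] My' f1 unfolding M_def w_alt A_def by auto
    have e4: "W_T L I x g f C y \<le> L/2 * (norm (y - B))^2 + T \<alpha>'"
      using M_W[OF My] My f1 unfolding M_def w_alt B_def by auto
    have e5: "(norm (y' - A))^2 = (norm (y - A))^2 + 2 * ((y - A) \<bullet> h) + (norm h)^2"
      using norm_sq_add[of "y - A" h] unfolding h_def by (simp add: algebra_simps)
    have e6: "(norm (y' - B))^2 = (norm (y - B))^2 + 2 * ((y - A) \<bullet> h + (A - B) \<bullet> h) + (norm h)^2"
      using norm_sq_add[of "y - B" h] unfolding h_def by (simp add: algebra_simps inner_diff_left)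
    have "\<bar>(A - B) \<bullet> h\<bar> \<le> norm (A - B) * norm h" by (rule Cauchy_Schwarz_ineq2)
    also have "\<dots> \<le> norm h * norm h"
      using nonexp[OF My My'] unfolding A_def B_def h_def
      by (simp add: mult_right_mono norm_minus_commute)
    finally have e7: "\<bar>(A - B) \<bullet> h\<bar> \<le> (norm h)^2" by (simp add: power2_eq_square)
    have main: "\<bar>W_T L I x g f C y' - W_T L I x g f C y - L * ((y - A) \<bullet> h)\<bar> \<le> L * (norm h)^2"
      by (rule aux2[OF Lpos e1 e2 e3 e4 e5 e6 e7])
    have "L * (norm h)^2 = (L * norm h) * norm h" by (simp add: power2_eq_square)
    also have "\<dots> \<le> e * norm h"
      using y' Lpos unfolding h_def by (intro mult_right_mono) (simp_all add: pos_less_divide_eq mult.commute)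
    finally show "norm (W_T L I x g f C y' - W_T L I x g f C y - (L *\<^sub>R (y - P \<nu> \<alpha>)) \<bullet> (y' - y)) \<le> e * norm (y' - y)"
      using main unfolding A_def h_def by simp
  qed
qed

lemma convW: "convex_on UNIV (W_T L I x g f C)"
  unfolding convex_on_def
proof (intro conjI convex_UNIV ballI allI impI)
  fix y1 y2 :: 'a and u v :: real
  assume u: "0 \<le> u" and v: "0 \<le> v" and uv: "u + v = 1"
  obtain \<nu>1 \<alpha>1 where M1: "M y1 \<nu>1 \<alpha>1" using exists_M by blast
  obtain \<nu>2 \<alpha>2 where M2: "M y2 \<nu>2 \<alpha>2" using exists_M by blast
  obtain \<nu> \<alpha> where M3: "M (u *\<^sub>R y1 + v *\<^sub>R y2) \<nu> \<alpha>" using exists_M by blast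
  have f: "\<nu>1 \<in> C" "\<alpha>1 \<in> simplex_idx I" "\<nu>2 \<in> C" "\<alpha>2 \<in> simplex_idx I" using M1 M2 unfolding M_def by auto
  have c1: "u *\<^sub>R \<nu>1 + v *\<^sub>R \<nu>2 \<in> C" using f u v uv by (intro convexD[OF cvxC]) auto
  have c2: "(\<lambda>k. u * \<alpha>1 k + v * \<alpha>2 k) \<in> simplex_idx I" using f u v uv by (intro simplex_comb) auto
  have "W_T L I x g f C (u *\<^sub>R y1 + v *\<^sub>R y2) \<le> w_T L I x g f (u *\<^sub>R y1 + v *\<^sub>R y2) (u *\<^sub>R \<nu>1 + v *\<^sub>R \<nu>2) (\<lambda>k. u * \<alpha>1 k + v * \<alpha>2 k)"
    using M_W[OF M3] M3 c1 c2 unfolding M_def by auto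
  also have "\<dots> = L/2 * (norm (u *\<^sub>R (y1 - P \<nu>1 \<alpha>1) + v *\<^sub>R (y2 - P \<nu>2 \<alpha>2)))^2 + (u * T \<alpha>1 + v * T \<alpha>2)"
    unfolding w_alt P_comb T_comb by (simp add: algebra_simps)
  also have "\<dots> \<le> L/2 * (u * (norm (y1 - P \<nu>1 \<alpha>1))^2 + v * (norm (y2 - P \<nu>2 \<alpha>2))^2) + (u * T \<alpha>1 + v * T \<alpha>2)"
    using norm_sq_convex[OF u v uv] Lpos by (simp add: mult_left_mono)
  also have "\<dots> = u * W_T L I x g f C y1 + v * W_T L I x g f C y2"
    unfolding M_W[OF M1] M_W[OF M2] w_alt by (simp add: algebra_simps)
  finally show "W_T L I x g f C (u *\<^sub>R y1 + v *\<^sub>R y2) \<le> u * W_T L I x g f C y1 + v * W_T L I x g f C y2" .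
qed

lemma C11W: "C11 L (W_T L I x g f C)"
proof -
  obtain nu al where nual: "\<And>y. M y (nu y) (al y)"
    using exists_M by metis
  define G where "G y = L *\<^sub>R (y - P (nu y) (al y))" for y
  show ?thesis unfolding C11_def
  proof (intro exI[of _ G] conjI allI)
    fix zz show "(W_T L I x g f C has_derivative (\<lambda>h. G zz \<bullet> h)) (at zz)"
      unfolding G_def by (rule deriv[OF nual])
  next
    fix u v
    have "norm (G u - G v) = L * norm ((u - P (nu u) (al u)) - (v - P (nu v) (al v)))"
      unfolding G_def using Lpos by (simp flip: scaleR_diff_right)
    also have "\<dots> \<le> L * norm (u - v)"
      using lip[OF nual[of v] nual[of u]] Lpos by (simp add: mult_left_mono)
    finally show "norm (G u - G v) \<le> L * norm (u - v)" .
  qed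
qed

end



lemma aux3:
  fixes L nn mm ip gxi gxk fi fk :: real
  assumes "L > 0" "1 / (2 * L) * (nn - 2 * ip + mm) \<le> fk - fi - (gxk - gxi)"
  shows "0 \<le> nn / (2 * L) + (gxi - 1/L * nn) - (gxk - 1/L * ip) + (fk - 1/(2*L) * mm) - fi"
proof -
  have "nn / (2 * L) - 1/L * nn + 1/L * ip - 1/(2*L) * mm = - (1 / (2 * L) * (nn - 2 * ip + mm))"
    using assms(1) by (simp add: field_simps)
  then show ?thesis using assms(2) by linarith
qed

context wsetup
begin

lemma inner_nonneg:
  assumes cp: "closest_point C (- (1 / L) *\<^sub>R g i) = 0" and n: "\<nu> \<in> C"
  shows "0 \<le> g i \<bullet> \<nu>"
proof -
  define p where "p = - (1 / L) *\<^sub>R g i"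
  have key: "0 \<le> (-2 * (p \<bullet> \<nu>)) * s + (norm \<nu>)^2 * s ^ 2" if s: "0 < s" "s \<le> 1" for s
  proof -
    have "(1 - s) *\<^sub>R 0 + s *\<^sub>R \<nu> \<in> C" using s C0 n by (intro convexD[OF cvxC]) auto
    then have "s *\<^sub>R \<nu> \<in> C" by simp
    then have "dist p (closest_point C p) \<le> dist p (s *\<^sub>R \<nu>)" by (rule closest_point_le[OF clC])
    then have "norm p \<le> norm (p - s *\<^sub>R \<nu>)" using cp unfolding p_def by (simp add: dist_norm)
    then have "(norm p)^2 \<le> (norm (p - s *\<^sub>R \<nu>))^2" by (simp add: power_mono)
    then show ?thesis unfolding norm_sq_diff by (simp add: algebra_simps)
  qed
  have "0 \<le> -2 * (p \<bullet> \<nu>)" by (rule quad_nonneg[OF key zero_le_power2])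
  then have "0 \<le> (1/L) * (g i \<bullet> \<nu>)" unfolding p_def by simp
  then show ?thesis using Lpos by (simp add: zero_le_divide_iff)
qed

lemma point:
  assumes i: "i \<in> I" and cp: "closest_point C (- (1 / L) *\<^sub>R g i) = 0"
    and H: "\<forall>j\<in>I. 1 / (2 * L) * (norm (g i - g j))\<^sup>2 \<le> f j - f i - g i \<bullet> (x j - x i)"
  shows "M (x i) 0 (\<lambda>k. if k = i then 1 else 0) \<and> w_T L I x g f (x i) 0 (\<lambda>k. if k = i then 1 else 0) = f i
     \<and> L *\<^sub>R (x i - P 0 (\<lambda>k. if k = i then 1 else 0)) = g i"
proof -
  define \<delta> where "\<delta> = (\<lambda>k. if k = i then 1 else (0::real))"
  have Pd: "P 0 \<delta> = z i" unfolding P_def \<delta>_def using sum_delta[OF i, of z] by simp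
  have "(\<Sum>k\<in>I. \<delta> k * c k) = (\<Sum>k\<in>I. if k = i then c k else 0)"
    unfolding \<delta>_def by (rule sum.cong) auto
  then have Td: "T \<delta> = c i" unfolding T_def using finI i by simp
  have xz: "x i - z i = (1/L) *\<^sub>R g i" unfolding z_def by simp
  have wv: "w_T L I x g f (x i) 0 \<delta> = f i"
  proof -
    have nn: "norm ((1/L) *\<^sub>R g i) = norm (g i) / L" using Lpos by simp
    have "w_T L I x g f (x i) 0 \<delta> = L/2 * (norm (g i) / L)^2 + c i"
      unfolding w_alt Pd Td xz nn by (rule refl)
    also have "\<dots> = f i" unfolding c_def using Lpos by (simp add: field_simps power2_eq_square)
    finally show ?thesis .
  qed
  have Mi: "M (x i) 0 \<delta>"
    unfolding M_def
  proof (intro conjI ballI C0)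
    show "\<delta> \<in> simplex_idx I" unfolding \<delta>_def by (rule delta_simplex[OF i])
    fix \<nu> \<alpha> assume n: "\<nu> \<in> C" and a: "\<alpha> \<in> simplex_idx I"
    have s1: "sum \<alpha> I = 1" and a0: "\<And>k. k \<in> I \<Longrightarrow> 0 \<le> \<alpha> k" using a unfolding simplex_idx_def by auto
    define gi where "gi = g i"
    define E where "E = \<nu> + z i - (\<Sum>k\<in>I. \<alpha> k *\<^sub>R z k)"
    define br where "br k = (norm gi)^2 / (2 * L) + (gi \<bullet> z i - gi \<bullet> z k) + c k - f i" for k
    have br0: "0 \<le> br k" if k: "k \<in> I" for k
    proof -
      have h0: "1 / (2 * L) * (norm (gi - g k))^2 \<le> f k - f i - gi \<bullet> (x k - x i)"
        using H k unfolding gi_def by blast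
      have nsd: "(norm (gi - g k))^2 = (norm gi)^2 - 2 * (gi \<bullet> g k) + (norm (g k))^2"
        using norm_sq_diff[of gi 1 "g k"] by simp
      have h: "1 / (2 * L) * ((norm gi)^2 - 2 * (gi \<bullet> g k) + (norm (g k))^2) \<le> f k - f i - (gi \<bullet> x k - gi \<bullet> x i)"
        using h0 unfolding nsd inner_diff_right .
      have "br k = (norm gi)^2 / (2 * L) + (gi \<bullet> x i - 1/L * (norm gi)^2) - (gi \<bullet> x k - 1/L * (gi \<bullet> g k)) + (f k - 1/(2*L) * (norm (g k))^2) - f i"
        unfolding br_def z_def c_def gi_def by (simp add: inner_diff_right power2_norm_eq_inner)
      then show ?thesis using aux3[OF Lpos h] by simp
    qed
    have sbr: "(\<Sum>k\<in>I. \<alpha> k * br k) = (norm gi)^2 / (2 * L) + (gi \<bullet> z i - gi \<bullet> (\<Sum>k\<in>I. \<alpha> k *\<^sub>R z k)) + T \<alpha> - f i"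
    proof -
      have "(\<Sum>k\<in>I. \<alpha> k * br k) = (\<Sum>k\<in>I. \<alpha> k * ((norm gi)^2 / (2 * L) + gi \<bullet> z i - f i)) - (\<Sum>k\<in>I. \<alpha> k * (gi \<bullet> z k)) + (\<Sum>k\<in>I. \<alpha> k * c k)"
        unfolding br_def by (simp add: algebra_simps sum.distrib sum_subtractf)
      also have "\<dots> = (norm gi)^2 / (2 * L) + gi \<bullet> z i - f i - gi \<bullet> (\<Sum>k\<in>I. \<alpha> k *\<^sub>R z k) + T \<alpha>"
        unfolding T_def by (simp add: sum_distrib_right[symmetric] s1 inner_sum_right)
      finally show ?thesis by simp
    qed
    have "0 \<le> (\<Sum>k\<in>I. \<alpha> k * br k)" using a0 br0 by (intro sum_nonneg) simp
    moreover have "0 \<le> gi \<bullet> \<nu>" unfolding gi_def by (rule inner_nonneg[OF cp n])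
    moreover have xe: "x i - P \<nu> \<alpha> = (1/L) *\<^sub>R gi + E" unfolding P_def E_def gi_def z_def by (simp add: algebra_simps)
    have nq: "(norm ((1/L) *\<^sub>R gi + E))^2 = (1/L)^2 * (norm gi)^2 + 2 * ((1/L) * (gi \<bullet> E)) + (norm E)^2"
      unfolding norm_sq_add by (simp add: power_divide power2_abs)
    have "w_T L I x g f (x i) \<nu> \<alpha> = L/2 * ((1/L)^2 * (norm gi)^2 + 2 * ((1/L) * (gi \<bullet> E)) + (norm E)^2) + T \<alpha>"
      unfolding w_alt xe nq by (rule refl)
    moreover have "L/2 * ((1/L)^2 * (norm gi)^2 + 2 * ((1/L) * (gi \<bullet> E)) + (norm E)^2) = (norm gi)^2 / (2 * L) + gi \<bullet> E + L/2 * (norm E)^2"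
      using Lpos by (simp add: field_simps power2_eq_square)
    moreover have "gi \<bullet> E = gi \<bullet> \<nu> + (gi \<bullet> z i - gi \<bullet> (\<Sum>k\<in>I. \<alpha> k *\<^sub>R z k))"
      unfolding E_def by (simp add: inner_add_right inner_diff_right)
    moreover have "0 \<le> L/2 * (norm E)^2" using Lpos by simp
    ultimately have "f i \<le> w_T L I x g f (x i) \<nu> \<alpha>" using sbr by linarith
    then show "w_T L I x g f (x i) 0 \<delta> \<le> w_T L I x g f (x i) \<nu> \<alpha>" using wv by simp
  qed
  have "L *\<^sub>R (x i - P 0 \<delta>) = g i" unfolding Pd xz using Lpos by simp
  then show ?thesis using Mi wv unfolding \<delta>_def by simp
qed

end


theorem theorem1:
  fixes L :: real and I :: "'i set" and x g :: "'i \<Rightarrow> 'a::euclidean_space"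
    and f :: "'i \<Rightarrow> real" and C :: "'a set"
  assumes "L > 0" and "finite I" and "I \<noteq> {}"
    and "closed C" and "convex C" and "0 \<in> C"
  shows "(\<forall>y. \<exists>\<nu>\<in>C. \<exists>\<alpha>\<in>simplex_idx I.
              w_T L I x g f y \<nu> \<alpha> = W_T L I x g f C y
            \<and> (\<forall>\<nu>'\<in>C. \<forall>\<alpha>'\<in>simplex_idx I. w_T L I x g f y \<nu> \<alpha> \<le> w_T L I x g f y \<nu>' \<alpha>'))
       \<and> convex_on UNIV (W_T L I x g f C)
       \<and> C11 L (W_T L I x g f C)
       \<and> (\<forall>i\<in>I. closest_point C (- (1 / L) *\<^sub>R g i) = 0
              \<and> (\<forall>j\<in>I. 1 / (2 * L) * (norm (g i - g j))\<^sup>2 \<le> f j - f i - g i \<bullet> (x j - x i))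
            \<longrightarrow> W_T L I x g f C (x i) = f i
              \<and> (W_T L I x g f C has_derivative (\<lambda>h. g i \<bullet> h)) (at (x i)))"
proof -
  interpret wsetup L I x g f C using assms by unfold_locales
  have A: "\<forall>y. \<exists>\<nu>\<in>C. \<exists>\<alpha>\<in>simplex_idx I.
              w_T L I x g f y \<nu> \<alpha> = W_T L I x g f C y
            \<and> (\<forall>\<nu>'\<in>C. \<forall>\<alpha>'\<in>simplex_idx I. w_T L I x g f y \<nu> \<alpha> \<le> w_T L I x g f y \<nu>' \<alpha>')"
  proof
    fix y
    obtain \<nu> \<alpha> where My: "M y \<nu> \<alpha>" using exists_M by blast
    then show "\<exists>\<nu>\<in>C. \<exists>\<alpha>\<in>simplex_idx I.
              w_T L I x g f y \<nu> \<alpha> = W_T L I x g f C y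
            \<and> (\<forall>\<nu>'\<in>C. \<forall>\<alpha>'\<in>simplex_idx I. w_T L I x g f y \<nu> \<alpha> \<le> w_T L I x g f y \<nu>' \<alpha>')"
      using M_W[OF My] unfolding M_def by auto
  qed
  have D: "\<forall>i\<in>I. closest_point C (- (1 / L) *\<^sub>R g i) = 0
              \<and> (\<forall>j\<in>I. 1 / (2 * L) * (norm (g i - g j))\<^sup>2 \<le> f j - f i - g i \<bullet> (x j - x i))
            \<longrightarrow> W_T L I x g f C (x i) = f i
              \<and> (W_T L I x g f C has_derivative (\<lambda>h. g i \<bullet> h)) (at (x i))"
  proof (intro ballI impI)
    fix i assume i: "i \<in> I" and h: "closest_point C (- (1 / L) *\<^sub>R g i) = 0
              \<and> (\<forall>j\<in>I. 1 / (2 * L) * (norm (g i - g j))\<^sup>2 \<le> f j - f i - g i \<bullet> (x j - x i))"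
    have p: "M (x i) 0 (\<lambda>k. if k = i then 1 else 0) \<and> w_T L I x g f (x i) 0 (\<lambda>k. if k = i then 1 else 0) = f i
     \<and> L *\<^sub>R (x i - P 0 (\<lambda>k. if k = i then 1 else 0)) = g i"
      using point[OF i] h by blast
    show "W_T L I x g f C (x i) = f i
              \<and> (W_T L I x g f C has_derivative (\<lambda>h. g i \<bullet> h)) (at (x i))"
    proof
      have M: "M (x i) 0 (\<lambda>k. if k = i then 1 else 0)" using p by blast
      have wv: "w_T L I x g f (x i) 0 (\<lambda>k. if k = i then 1 else 0) = f i" using p by blast
      have gl: "L *\<^sub>R (x i - P 0 (\<lambda>k. if k = i then 1 else 0)) = g i" using p by blast
      show "W_T L I x g f C (x i) = f i" using M_W[OF M] wv by simp
      have "(W_T L I x g f C has_derivative (\<lambda>h. (L *\<^sub>R (x i - P 0 (\<lambda>k. if k = i then 1 else 0))) \<bullet> h)) (at (x i))"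
        by (rule deriv[OF M])
      then show "(W_T L I x g f C has_derivative (\<lambda>h. g i \<bullet> h)) (at (x i))" unfolding gl .
    qed
  qed
  show ?thesis using A convW C11W D by blast
qed

end
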